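(* Let $G$ and $H$ be abelian groups, let $T \subset G$ be a tile, and let $\rho : G \to H$ be a surjective homomorphism that is injective on $T$. Let $k,\ell \ge 0$ be integers. If $G^k\times H^\ell$ is $(T^{\times k}, \rho(T)^{\times \ell})$-tilable, then $G^{k+\ell}$ is $T$-tilable.
   Context: A tile in an abelian group is a non-empty subset. Given abelian groups $K_1,\dots,K_r$ and tiles $V_j\subset K_j$, let $\mathsf{V}_j \subset K_1\times\dots\times K_r$ be the set of points whose $j$-th coordinate lies in $V_j$ and whose other coordinates are $0$. A copy of $V_j$ is a translate $\mathsf{V}_j + x$ with $x \in K_1\times\dots\times K_r$. A subset of $K_1\times\dots\times K_r$ is $(V_1,\dots,V_r)$-tilable if it is a disjoint union of copies of $V_1,\dots,V_r$. The notation $V^{\times e}$ stands for $e$ consecutive entries $V,\dots,V$, and "$T$-tilable" for a subset of $G^{e}$ means $(T^{\times e})$-tilable. *)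

theory Defs
  imports Main
begin

definition tile :: "'a set \<Rightarrow> bool" where
  "tile T \<longleftrightarrow> T \<noteq> {}"

text \<open>Points of G^n, modelled as functions nat => G vanishing at indices >= n.\<close>
definition pow_space :: "nat \<Rightarrow> (nat \<Rightarrow> 'g::zero) set" where
  "pow_space n = {x. \<forall>i. n \<le> i \<longrightarrow> x i = 0}"

definition single :: "nat \<Rightarrow> 'g::zero \<Rightarrow> nat \<Rightarrow> 'g" where
  "single i t = (\<lambda>m. if m = i then t else 0)"

definition copy_at :: "nat \<Rightarrow> 'g::monoid_add set \<Rightarrow> (nat \<Rightarrow> 'g) \<Rightarrow> (nat \<Rightarrow> 'g) set" where
  "copy_at i V x = {(\<lambda>m. single i t m + x m) | t. t \<in> V}"

definition pow_tilable :: "nat \<Rightarrow> 'g::monoid_add set \<Rightarrow> bool" where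
  "pow_tilable n T \<longleftrightarrow>
     (\<exists>\<C>. (\<forall>C\<in>\<C>. \<exists>i<n. \<exists>x\<in>pow_space n. C = copy_at i T x)
         \<and> pairwise disjnt \<C> \<and> \<Union>\<C> = pow_space n)"

definition mixed_tilable :: "nat \<Rightarrow> nat \<Rightarrow> 'g::monoid_add set \<Rightarrow> 'h::monoid_add set \<Rightarrow> bool" where
  "mixed_tilable k l T S \<longleftrightarrow>
     (\<exists>\<C>. (\<forall>C\<in>\<C>.
             (\<exists>i<k. \<exists>x\<in>pow_space k. \<exists>y\<in>pow_space l. C = copy_at i T x \<times> {y})
           \<or> (\<exists>j<l. \<exists>x\<in>pow_space k. \<exists>y\<in>pow_space l. C = {x} \<times> copy_at j S y))
         \<and> pairwise disjnt \<C> \<and> \<Union>\<C> = pow_space k \<times> pow_space l)"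

end

theory Submission
  imports Defs
begin

theorem corollary18:
  fixes T :: "'g::ab_group_add set" and \<rho> :: "'g \<Rightarrow> 'h::ab_group_add"
    and k l :: nat
  assumes "tile T"
    and "\<And>a b. \<rho> (a + b) = \<rho> a + \<rho> b"
    and "surj \<rho>"
    and "inj_on \<rho> T"
    and "mixed_tilable k l T (\<rho> ` T)"
  shows "pow_tilable (k + l) T"
proof -
  have hadd: "\<And>a b. \<rho> (a + b) = \<rho> a + \<rho> b" by (rule assms(2))
  have hsub: "\<And>a b. \<rho> (a - b) = \<rho> a - \<rho> b"
  proof -
    fix a b
    have "\<rho> a = \<rho> (a - b + b)" by simp
    also have "\<dots> = \<rho> (a - b) + \<rho> b" by (rule hadd)
    finally show "\<rho> (a - b) = \<rho> a - \<rho> b" by (simp add: algebra_simps)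
  qed
  have h0: "\<rho> 0 = 0" using hsub[of 0 0] by simp
  obtain \<C> where Ccov: "\<forall>C\<in>\<C>.
             (\<exists>i<k. \<exists>x\<in>pow_space k. \<exists>y\<in>pow_space l. C = copy_at i T x \<times> {y})
           \<or> (\<exists>j<l. \<exists>x\<in>pow_space k. \<exists>y\<in>pow_space l. C = {x} \<times> copy_at j (\<rho> ` T) y)"
    and Cdis: "pairwise disjnt \<C>" and Cun: "\<Union>\<C> = pow_space k \<times> pow_space l"
    using assms(5) unfolding mixed_tilable_def by blast
  define pi :: "(nat \<Rightarrow> 'g) \<Rightarrow> (nat \<Rightarrow> 'g) \<times> (nat \<Rightarrow> 'h)" where
    "pi p = (\<lambda>m. if m < k then p m else 0, \<lambda>m. if m < l then \<rho> (p (k + m)) else 0)" for p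
  define S where "S = (pow_space (k + l) :: (nat \<Rightarrow> 'g) set)"
  define valid :: "((nat \<Rightarrow> 'g) \<times> (nat \<Rightarrow> 'h)) set \<Rightarrow> bool \<times> nat \<times> (nat \<Rightarrow> 'g) \<times> (nat \<Rightarrow> 'h) \<Rightarrow> bool"
    where "valid C r = (case r of (b, i, x, y) \<Rightarrow>
       if b then i < k \<and> C = copy_at i T x \<times> {y} else i < l \<and> C = {x} \<times> copy_at i (\<rho> ` T) y)" for C r
  define Cof where "Cof p = (THE C. C \<in> \<C> \<and> pi p \<in> C)" for p
  define rep where "rep C = (SOME r. valid C r)" for C
  define cc where "cc p = (case rep (Cof p) of (b, i, x, y) \<Rightarrow> if b then i else k + i)" for p
  define t0 where "t0 p = (case rep (Cof p) of (b, i, x, y) \<Rightarrow>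
      if b then p i - x i else (THE t. t \<in> T \<and> \<rho> (p (k + i)) = y i + \<rho> t))" for p
  define D where "D p = copy_at (cc p) T (\<lambda>m. p m - single (cc p) (t0 p) m)" for p
  have piS: "pi p \<in> pow_space k \<times> pow_space l" if "p \<in> S" for p
    using that h0 by (auto simp: pi_def pow_space_def S_def)
  have Cof: "Cof p = C" if "C \<in> \<C>" "pi p \<in> C" for p C
    unfolding Cof_def
  proof (rule the_equality)
    show "C \<in> \<C> \<and> pi p \<in> C" using that by simp
    fix C' assume "C' \<in> \<C> \<and> pi p \<in> C'"
    then show "C' = C" using that Cdis by (metis disjnt_iff pairwiseD)
  qed
  have CofS: "Cof p \<in> \<C> \<and> pi p \<in> Cof p" if "p \<in> S" for p
  proof -
    have pp: "pi p \<in> pow_space k \<times> pow_space l" by (rule piS[OF that])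
    obtain C where "C \<in> \<C>" "pi p \<in> C" using pp unfolding Cun[symmetric] by (rule UnionE)
    then show ?thesis using Cof by simp
  qed
  have repv: "valid C (rep C)" if "C \<in> \<C>" for C
  proof -
    have "\<exists>r. valid C r"
    proof (cases "\<exists>i<k. \<exists>x\<in>pow_space k. \<exists>y\<in>pow_space l. C = copy_at i T x \<times> {y}")
      case True
      then obtain i x y where "i < k" "C = copy_at i T x \<times> {y}" by blast
      then have "valid C (True, i, x, y)" by (simp add: valid_def)
      then show ?thesis by blast
    next
      case False
      have "\<exists>j<l. \<exists>x\<in>pow_space k. \<exists>y\<in>pow_space l. C = {x} \<times> copy_at j (\<rho> ` T) y"
        using Ccov that False by metis
      then obtain i x y where "i < l" "C = {x} \<times> copy_at i (\<rho> ` T) y" by blast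
      then have "valid C (False, i, x, y)" by (simp add: valid_def)
      then show ?thesis by blast
    qed
    then show ?thesis unfolding rep_def by (rule someI_ex)
  qed
  have key: "cc p < k + l \<and> t0 p \<in> T \<and> (\<forall>q\<in>D p. cc q = cc p \<and> t0 q = q (cc p) - p (cc p) + t0 p)"
    if pS: "p \<in> S" for p
  proof -
    define C where "C = Cof p"
    have CC: "C \<in> \<C>" "pi p \<in> C" using CofS[OF pS] C_def by auto
    obtain b i x y where r: "rep C = (b, i, x, y)" by (cases "rep C") auto
    have v: "valid C (b, i, x, y)" using repv[OF CC(1)] r by simp
    show ?thesis
    proof (cases b)
      case True
      then have ik: "i < k" and Ceq: "C = copy_at i T x \<times> {y}" using v by (auto simp: valid_def)
      have ccp: "cc p = i" using r True by (simp add: cc_def C_def[symmetric])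
      have t0p: "t0 p = p i - x i" using r True by (simp add: t0_def C_def[symmetric])
      from CC(2) Ceq obtain t where t: "t \<in> T" "fst (pi p) = (\<lambda>m. single i t m + x m)" "snd (pi p) = y"
        by (auto simp: copy_at_def)
      have pi_: "p i = t + x i" using fun_cong[OF t(2), of i] ik by (simp add: pi_def single_def)
      have t0t: "t0 p = t" using t0p pi_ by simp
      show ?thesis
      proof (intro conjI ballI)
        show "cc p < k + l" using ccp ik by simp
        show "t0 p \<in> T" using t0t t by simp
        fix q assume q: "q \<in> D p"
        then obtain t' where t': "t' \<in> T" "q = (\<lambda>m. single i t' m + (p m - single i (t0 p) m))"
          by (auto simp: D_def copy_at_def ccp)
        have f: "fst (pi q) = (\<lambda>m. single i t' m + x m)"
        proof
          fix m
          have qm: "q m = (if m = i then t' + (p m - t0 p) else p m)" using t'(2) by (simp add: single_def)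
          have pm: "fst (pi p) m = single i t m + x m" using t(2) by simp
          show "fst (pi q) m = single i t' m + x m"
          proof (cases "m = i")
            case True
            then show ?thesis using qm pi_ t0t ik by (simp add: pi_def single_def)
          next
            case False
            then have "fst (pi q) m = fst (pi p) m" using qm by (simp add: pi_def)
            then show ?thesis using pm False by (simp add: single_def)
          qed
        qed
        have s: "snd (pi q) = snd (pi p)"
        proof
          fix m
          have "q (k + m) = p (k + m)" using t'(2) ik by (simp add: single_def)
          then show "snd (pi q) m = snd (pi p) m" by (simp add: pi_def)
        qed
        have "fst (pi q) \<in> copy_at i T x" unfolding f copy_at_def using t'(1) by blast
        moreover have "snd (pi q) = y" using s t(3) by simp
        ultimately have "pi q \<in> C" unfolding Ceq by (simp add: mem_Times_iff)
        then have "Cof q = C" by (rule Cof[OF CC(1)])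
        then have rq: "rep (Cof q) = (b, i, x, y)" using r by simp
        have qi: "q i = t' + (p i - t)" using t'(2) t0t by (simp add: single_def)
        show "cc q = cc p" using rq ccp True by (simp add: cc_def)
        have t0q: "t0 q = q i - x i" using rq True by (simp add: t0_def)
        have "q i - x i = t'" unfolding qi pi_ by (simp add: algebra_simps)
        moreover have "q i - p i + t0 p = t'" unfolding qi t0t by (simp add: algebra_simps)
        ultimately show "t0 q = q (cc p) - p (cc p) + t0 p"
          using t0q ccp by simp
      qed
    next
      case False
      then have il: "i < l" and Ceq: "C = {x} \<times> copy_at i (\<rho> ` T) y" using v by (auto simp: valid_def)
      have ccp: "cc p = k + i" using r False by (simp add: cc_def C_def[symmetric])
      have t0p: "t0 p = (THE t. t \<in> T \<and> \<rho> (p (k + i)) = y i + \<rho> t)"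
        using r False by (simp add: t0_def C_def[symmetric])
      from CC(2) Ceq obtain t where t: "t \<in> T" "snd (pi p) = (\<lambda>m. single i (\<rho> t) m + y m)" "fst (pi p) = x"
        by (auto simp: copy_at_def)
      have pi_: "\<rho> (p (k + i)) = y i + \<rho> t" using fun_cong[OF t(2), of i] il by (simp add: pi_def single_def add.commute)
      have uniq: "t' = t" if "t' \<in> T" "\<rho> (p (k + i)) = y i + \<rho> t'" for t'
        using that pi_ t(1) assms(4) by (metis add_left_cancel inj_onD)
      have t0t: "t0 p = t" unfolding t0p
      proof (rule the_equality)
        show "t \<in> T \<and> \<rho> (p (k + i)) = y i + \<rho> t" using t(1) pi_ by blast
        fix u assume "u \<in> T \<and> \<rho> (p (k + i)) = y i + \<rho> u"
        then show "u = t" using uniq by blast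
      qed
      show ?thesis
      proof (intro conjI ballI)
        show "cc p < k + l" using ccp il by simp
        show "t0 p \<in> T" using t0t t by simp
        fix q assume q: "q \<in> D p"
        then obtain t' where t': "t' \<in> T" "q = (\<lambda>m. single (k + i) t' m + (p m - single (k + i) (t0 p) m))"
          by (auto simp: D_def copy_at_def ccp)
        have qi: "q (k + i) = t' + (p (k + i) - t)" using t'(2) t0t by (simp add: single_def)
        have f: "fst (pi q) = fst (pi p)"
        proof
          fix m
          show "fst (pi q) m = fst (pi p) m"
          proof (cases "m < k")
            case True
            then have "q m = p m" using t'(2) by (simp add: single_def)
            then show ?thesis by (simp add: pi_def)
          qed (simp add: pi_def)
        qed
        have s: "snd (pi q) = (\<lambda>m. single i (\<rho> t') m + y m)"
        proof
          fix m
          show "snd (pi q) m = single i (\<rho> t') m + y m"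
          proof (cases "m = i")
            case True
            have "\<rho> (q (k + i)) = \<rho> t' + (\<rho> (p (k + i)) - \<rho> t)" unfolding qi hadd hsub ..
            also have "\<dots> = \<rho> t' + y i" unfolding pi_ by simp
            finally have "\<rho> (q (k + i)) = \<rho> t' + y i" .
            then show ?thesis using True il by (simp add: pi_def single_def)
          next
            case False
            have qp: "q (k + m) = p (k + m)" using t'(2) False by (simp add: single_def)
            have "snd (pi p) m = y m" using fun_cong[OF t(2), of m] False by (simp add: single_def)
            moreover have "snd (pi q) m = snd (pi p) m" using qp by (simp add: pi_def)
            ultimately show ?thesis using False by (simp add: single_def)
          qed
        qed
        have "snd (pi q) \<in> copy_at i (\<rho> ` T) y" unfolding s copy_at_def using t'(1) by blast
        moreover have "fst (pi q) = x" using f t(3) by simp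
        ultimately have "pi q \<in> C" unfolding Ceq by (simp add: mem_Times_iff)
        then have "Cof q = C" by (rule Cof[OF CC(1)])
        then have rq: "rep (Cof q) = (b, i, x, y)" using r by simp
        have "snd (pi q) i = \<rho> t' + y i" using fun_cong[OF s, of i] by (simp add: single_def)
        then have rhoq: "\<rho> (q (k + i)) = y i + \<rho> t'"
          using il by (simp add: pi_def add.commute)
        have t0q: "t0 q = t'"
        proof -
          have "t0 q = (THE t. t \<in> T \<and> \<rho> (q (k + i)) = y i + \<rho> t)"
            using rq False by (simp add: t0_def)
          also have "\<dots> = t'"
          proof (rule the_equality)
            show "t' \<in> T \<and> \<rho> (q (k + i)) = y i + \<rho> t'" using t'(1) rhoq by simp
            fix u assume "u \<in> T \<and> \<rho> (q (k + i)) = y i + \<rho> u"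
            then show "u = t'" using rhoq t'(1) assms(4) by (metis add_left_cancel inj_onD)
          qed
          finally show ?thesis .
        qed
        show "cc q = cc p" using rq ccp False by (simp add: cc_def)
        show "t0 q = q (cc p) - p (cc p) + t0 p"
        proof -
          have "q (k + i) - p (k + i) + t = t'" unfolding qi by (simp add: algebra_simps)
          then show ?thesis using ccp t0t t0q by simp
        qed
      qed
    qed
  qed
  have key1: "cc p < k + l" "t0 p \<in> T" if "p \<in> S" for p using key[OF that] by blast+
  have key2: "cc q = cc p" "t0 q = q (cc p) - p (cc p) + t0 p" if "p \<in> S" "q \<in> D p" for p q
    using key[OF that(1)] that(2) by blast+
  have Dsub: "D p \<subseteq> S" if "p \<in> S" for p
  proof
    fix q assume "q \<in> D p"
    then obtain t where q: "q = (\<lambda>m. single (cc p) t m + (p m - single (cc p) (t0 p) m))"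
      by (auto simp: D_def copy_at_def)
    show "q \<in> S" unfolding q using key1(1)[OF that] that by (simp add: S_def pow_space_def single_def)
  qed
  have pD: "p \<in> D p" if "p \<in> S" for p
  proof -
    have "p = (\<lambda>m. single (cc p) (t0 p) m + (p m - single (cc p) (t0 p) m))" by simp
    then show ?thesis using key1(2)[OF that] unfolding D_def copy_at_def by blast
  qed
  have Dq: "D q = D p" if pq: "p \<in> S" "q \<in> D p" for p q
  proof -
    have e: "cc q = cc p" "t0 q = q (cc p) - p (cc p) + t0 p" using key2[OF pq] by auto
    obtain t' where qq: "q = (\<lambda>m. single (cc p) t' m + (p m - single (cc p) (t0 p) m))"
      using pq(2) by (auto simp: D_def copy_at_def)
    have "(\<lambda>m. q m - single (cc q) (t0 q) m) = (\<lambda>m. p m - single (cc p) (t0 p) m)"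
    proof
      fix m
      show "q m - single (cc q) (t0 q) m = p m - single (cc p) (t0 p) m"
      proof (cases "m = cc p")
        case True
        have "q (cc p) - t0 q = p (cc p) - t0 p" unfolding e(2) by (simp add: algebra_simps)
        then show ?thesis using True e(1) by (simp add: single_def)
      next
        case False
        have "q m = p m" using False qq by (simp add: single_def)
        then show ?thesis using False e(1) by (simp add: single_def)
      qed
    qed
    then show ?thesis unfolding D_def e(1) by simp
  qed
  show ?thesis
    unfolding pow_tilable_def
  proof (intro exI[of _ "D ` S"] conjI)
    show "\<forall>C\<in>D ` S. \<exists>i<k + l. \<exists>x\<in>pow_space (k + l). C = copy_at i T x"
    proof
      fix C assume "C \<in> D ` S"
      then obtain p where p: "p \<in> S" "C = D p" by blast
      have "(\<lambda>m. p m - single (cc p) (t0 p) m) \<in> pow_space (k + l)"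
        using p(1) key1(1)[OF p(1)] by (simp add: S_def pow_space_def single_def)
      then show "\<exists>i<k + l. \<exists>x\<in>pow_space (k + l). C = copy_at i T x"
        using p key1(1)[OF p(1)] unfolding D_def by blast
    qed
    show "pairwise disjnt (D ` S)"
    proof (rule pairwiseI)
      fix A B assume A: "A \<in> D ` S" and B: "B \<in> D ` S" and ne: "A \<noteq> B"
      show "disjnt A B"
      proof (rule ccontr)
        assume "\<not> disjnt A B"
        then obtain r where r: "r \<in> A" "r \<in> B" by (auto simp: disjnt_def)
        obtain p where p: "p \<in> S" "A = D p" using A by blast
        obtain q where q: "q \<in> S" "B = D q" using B by blast
        have "D r = D p" using Dq[OF p(1)] r(1) p(2) by blast
        moreover have "D r = D q" using Dq[OF q(1)] r(2) q(2) by blast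
        ultimately show False using ne p(2) q(2) by simp
      qed
    qed
    show "\<Union> (D ` S) = pow_space (k + l)"
    proof
      show "\<Union> (D ` S) \<subseteq> pow_space (k + l)" using Dsub unfolding S_def by blast
      show "pow_space (k + l) \<subseteq> \<Union> (D ` S)"
      proof
        fix p :: "nat \<Rightarrow> 'g" assume "p \<in> pow_space (k + l)"
        then have "p \<in> S" by (simp add: S_def)
        then show "p \<in> \<Union> (D ` S)" using pD by blast
      qed
    qed
  qed
qed

end
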